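(* Let $L=\langle S,A,\to\rangle$ be a labelled transition system. For every $x,y\in\{o,b\}$ and $\bar s,\bar t\in S$, we have $\bar s\mathrel{\underline{\leftrightarrow}}_{(x,y)}\bar t$ if and only if $\bar s\,R\,\bar t$ for some symmetric relation $R\subseteq S\times S$ such that whenever $s\,R\,t$ and $s\xrightarrow{a}s'$, either $a=\tau$ and $s'\,R\,t$, or there exist states $t',t_1,t_2$ with $t\Longrightarrow_{x,R,s}t_1\xrightarrow{a}t_2\Longrightarrow_{y,R,s'}t'$ and $s'\,R\,t'$.
   Context: An LTS is $\langle S,A,\to\rangle$ with states $S$, actions $A$ containing the internal action $\tau$, and $\to\subseteq S\times A\times S$; write $s\xrightarrow{a}t$, and $\twoheadrightarrow$ for the reflexive-transitive closure of $\xrightarrow{\tau}$. For $R\subseteq S\times S$ and $s,s',t$: $s\twoheadrightarrow_{o,R,t}s'$ iff $s\twoheadrightarrow s'$; $s\twoheadrightarrow_{b,R,t}s'$ iff $s\twoheadrightarrow s'$, $t\,R\,s$ and $t\,R\,s'$. Further, $s\Longrightarrow_{o,R,t}s'$ iff $s\twoheadrightarrow s'$, and $s\Longrightarrow_{b,R,t}s'$ iff there is a finite sequence $s=s_0\xrightarrow{\tau}s_1\xrightarrow{\tau}\cdots\xrightarrow{\tau}s_n=s'$ with $t\,R\,s_i$ for all $i$. For $x,y\in\{o,b\}$, a symmetric $R$ is an $(x,y)$-generic bisimulation if whenever $s\,R\,t$ and $s\xrightarrow{a}s'$, either $a=\tau$ and $s'\,R\,t$, or there exist $t',t_1,t_2$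 with $t\twoheadrightarrow_{x,R,s}t_1\xrightarrow{a}t_2\twoheadrightarrow_{y,R,s'}t'$ and $s'\,R\,t'$. $s\mathrel{\underline{\leftrightarrow}}_{(x,y)}t$ iff some $(x,y)$-generic bisimulation relates $s$ and $t$. *)

theory Defs
  imports Main
begin

text \<open>An LTS over states 's and actions 'a is given by a transition predicate
  tr s a t (meaning s --a--> t) together with a designated internal action tau.\<close>

datatype mode = Om | Bm

definition tau_steps :: "('s \<Rightarrow> 'a \<Rightarrow> 's \<Rightarrow> bool) \<Rightarrow> 'a \<Rightarrow> 's \<Rightarrow> 's \<Rightarrow> bool" where
  "tau_steps tr tau = (\<lambda>s t. tr s tau t)\<^sup>*\<^sup>*"

definition ttrans :: "('s \<Rightarrow> 'a \<Rightarrow> 's \<Rightarrow> bool) \<Rightarrow> 'a \<Rightarrow> mode \<Rightarrow> ('s \<Rightarrow> 's \<Rightarrow> bool) \<Rightarrow> 's \<Rightarrow> 's \<Rightarrow> 's \<Rightarrow> bool" where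
  "ttrans tr tau x R t s s' = (case x of
      Om \<Rightarrow> tau_steps tr tau s s'
    | Bm \<Rightarrow> tau_steps tr tau s s' \<and> R t s \<and> R t s')"

definition wtrans :: "('s \<Rightarrow> 'a \<Rightarrow> 's \<Rightarrow> bool) \<Rightarrow> 'a \<Rightarrow> mode \<Rightarrow> ('s \<Rightarrow> 's \<Rightarrow> bool) \<Rightarrow> 's \<Rightarrow> 's \<Rightarrow> 's \<Rightarrow> bool" where
  "wtrans tr tau x R t s s' = (case x of
      Om \<Rightarrow> tau_steps tr tau s s'
    | Bm \<Rightarrow> (\<exists>n f. f 0 = s \<and> f n = s' \<and> (\<forall>i<n. tr (f i) tau (f (Suc i))) \<and> (\<forall>i\<le>n. R t (f i))))"

definition generic_bisim :: "('s \<Rightarrow> 'a \<Rightarrow> 's \<Rightarrow> bool) \<Rightarrow> 'a \<Rightarrow> mode \<Rightarrow> mode \<Rightarrow> ('s \<Rightarrow> 's \<Rightarrow> bool) \<Rightarrow> bool" where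
  "generic_bisim tr tau x y R \<longleftrightarrow> symp R \<and>
     (\<forall>s t a s'. R s t \<and> tr s a s' \<longrightarrow>
        (a = tau \<and> R s' t) \<or>
        (\<exists>t' t1 t2. ttrans tr tau x R s t t1 \<and> tr t1 a t2 \<and> ttrans tr tau y R s' t2 t' \<and> R s' t'))"

definition generic_bisimilar :: "('s \<Rightarrow> 'a \<Rightarrow> 's \<Rightarrow> bool) \<Rightarrow> 'a \<Rightarrow> mode \<Rightarrow> mode \<Rightarrow> 's \<Rightarrow> 's \<Rightarrow> bool" where
  "generic_bisimilar tr tau x y s t \<longleftrightarrow> (\<exists>R. generic_bisim tr tau x y R \<and> R s t)"

end

theory Submission
  imports Defs
begin

context
  fixes tr :: "'s \<Rightarrow> 'a \<Rightarrow> 's \<Rightarrow> bool" and tau :: 'a and x y :: mode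
begin

abbreviation T where "T \<equiv> tau_steps tr tau"

lemma T_refl: "T a a" by (simp add: tau_steps_def)
lemma T_trans: "T a b \<Longrightarrow> T b c \<Longrightarrow> T a c"
  unfolding tau_steps_def by (rule rtranclp_trans)
lemma T_step: "tr a tau b \<Longrightarrow> T a b"
  unfolding tau_steps_def by auto
lemma T_snoc: "T a b \<Longrightarrow> tr b tau c \<Longrightarrow> T a c"
  unfolding tau_steps_def by (rule rtranclp.rtrancl_into_rtrancl)
lemma T_cons: "tr a tau b \<Longrightarrow> T b c \<Longrightarrow> T a c"
  unfolding tau_steps_def by (auto intro: converse_rtranclp_into_rtranclp)
lemma T_end: "T a b \<Longrightarrow> a = b \<or> (\<exists>w. T a w \<and> tr w tau b)"
  unfolding tau_steps_def by (erule rtranclp.cases) auto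
lemma T_start: "T a b \<Longrightarrow> a = b \<or> (\<exists>w. tr a tau w \<and> T w b)"
  unfolding tau_steps_def by (erule converse_rtranclpE) auto
lemma T_induct[consumes 1, case_names refl step]:
  "T a b \<Longrightarrow> P a \<Longrightarrow> (\<And>b c. T a b \<Longrightarrow> tr b tau c \<Longrightarrow> P b \<Longrightarrow> P c) \<Longrightarrow> P b"
  unfolding tau_steps_def by (erule rtranclp_induct) auto

definition ans where
  "ans R s t a s' \<longleftrightarrow> (a = tau \<and> (\<exists>t'. T t t' \<and> (x = Bm \<longrightarrow> R s t') \<and> R s' t')) \<or>
     (\<exists>t1 t2 t'. T t t1 \<and> (x = Bm \<longrightarrow> R s t1) \<and> tr t1 a t2 \<and> T t2 t' \<and> (y = Bm \<longrightarrow> R s' t2) \<and> R s' t')"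

definition rlx where
  "rlx R \<longleftrightarrow> symp R \<and> (\<forall>s t a s'. R s t \<and> tr s a s' \<longrightarrow> ans R s t a s')"

definition BR where "BR s t \<longleftrightarrow> (\<exists>R. rlx R \<and> R s t)"

lemma ans_mono: "ans R s t a s' \<Longrightarrow> (\<And>u v. R u v \<Longrightarrow> R2 u v) \<Longrightarrow> ans R2 s t a s'"
  unfolding ans_def by blast

lemma ans_prefix: "T v v' \<Longrightarrow> ans R s v' a s' \<Longrightarrow> ans R s v a s'"
  unfolding ans_def by (meson T_trans)

lemma BR_sym: "BR s t \<Longrightarrow> BR t s"
  unfolding BR_def rlx_def
proof -
  assume "\<exists>R. (symp R \<and> (\<forall>s t a s'. R s t \<and> tr s a s' \<longrightarrow> ans R s t a s')) \<and> R s t"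
  then obtain R where "symp R" "R s t" "\<forall>s t a s'. R s t \<and> tr s a s' \<longrightarrow> ans R s t a s'" by blast
  then show "\<exists>R. (symp R \<and> (\<forall>s t a s'. R s t \<and> tr s a s' \<longrightarrow> ans R s t a s')) \<and> R t s"
    by (blast dest: sympD)
qed

lemma ans_BR: "BR s t \<Longrightarrow> tr s a s' \<Longrightarrow> ans BR s t a s'"
proof -
  assume "BR s t" "tr s a s'"
  then obtain R where R: "rlx R" "R s t" unfolding BR_def by blast
  then have "ans R s t a s'" using \<open>tr s a s'\<close> unfolding rlx_def by blast
  then show ?thesis by (rule ans_mono) (use R in \<open>auto simp: BR_def\<close>)
qed

lemma rlx_BR: "rlx BR"
  unfolding rlx_def using BR_sym ans_BR by (auto intro: sympI)

lemma rlx_le: "rlx R \<Longrightarrow> R s t \<Longrightarrow> BR s t"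
  unfolding BR_def by blast

lemma chain: "T q q' \<Longrightarrow> rlx R \<Longrightarrow> R q r \<Longrightarrow> \<exists>r'. T r r' \<and> R q' r'"
proof (induction rule: T_induct)
  case refl then show ?case using T_refl by blast
next
  case (step b c)
  then obtain r'' where r'': "T r r''" "R b r''" by blast
  then have "ans R b r'' tau c" using step unfolding rlx_def by blast
  then show ?case unfolding ans_def using r'' by (meson T_trans T_cons)
qed

lemma BR_trans: "BR p q \<Longrightarrow> BR q r \<Longrightarrow> BR p r"
proof -
  define C where "C = (\<lambda>p r. \<exists>q. BR p q \<and> BR q r)"
  have "rlx C"
    unfolding rlx_def
  proof (intro conjI allI impI)
    show "symp C" unfolding C_def by (auto intro!: sympI dest: BR_sym)
  next
    fix p r a p' assume "C p r \<and> tr p a p'"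
    then obtain q where pq: "BR p q" and qr: "BR q r" and st: "tr p a p'" unfolding C_def by blast
    have "ans BR p q a p'" using ans_BR pq st by blast
    from this[unfolded ans_def] show "ans C p r a p'"
    proof (elim disjE exE conjE)
      fix q' assume a: "a = tau" and "T q q'" and h1: "x = Bm \<longrightarrow> BR p q'" and h2: "BR p' q'"
      obtain r' where "T r r'" "BR q' r'" using chain[OF \<open>T q q'\<close> rlx_BR qr] by blast
      then show ?thesis using a h1 h2 unfolding C_def ans_def by blast
    next
      fix q1 q2 q' assume "T q q1" and h1: "x = Bm \<longrightarrow> BR p q1" and "tr q1 a q2" and "T q2 q'"
        and h2: "y = Bm \<longrightarrow> BR p' q2" and h3: "BR p' q'"
      obtain r1 where r1: "T r r1" "BR q1 r1" using chain[OF \<open>T q q1\<close> rlx_BR qr] by blast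
      have "ans BR q1 r1 a q2" using ans_BR r1(2) \<open>tr q1 a q2\<close> by blast
      from this[unfolded ans_def] show ?thesis
      proof (elim disjE exE conjE)
        fix r2 assume a: "a = tau" and "T r1 r2" and g1: "x = Bm \<longrightarrow> BR q1 r2" and g2: "BR q2 r2"
        obtain r' where r': "T r2 r'" "BR q' r'" using chain[OF \<open>T q2 q'\<close> rlx_BR g2] by blast
        have Tr2: "T r r2" using r1 \<open>T r1 r2\<close> T_trans by blast
        show ?thesis
        proof (cases y)
          case Bm then show ?thesis using a Tr2 g1 g2 h1 h2 unfolding C_def ans_def by blast
        next
          case Om
          from T_start[OF r'(1)] show ?thesis
          proof
            assume "r2 = r'" then show ?thesis using a Tr2 g1 h1 h3 r' unfolding C_def ans_def by blast
          next
            assume "\<exists>w. tr r2 tau w \<and> T w r'"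
            then obtain w where "tr r2 tau w" "T w r'" by blast
            then show ?thesis using a Tr2 g1 h1 h3 r' Om unfolding C_def ans_def by blast
          qed
        qed
      next
        fix r2 r3 r4 assume "T r1 r2" and g1: "x = Bm \<longrightarrow> BR q1 r2" and "tr r2 a r3" and "T r3 r4"
          and g2: "y = Bm \<longrightarrow> BR q2 r3" and g3: "BR q2 r4"
        obtain r' where r': "T r4 r'" "BR q' r'" using chain[OF \<open>T q2 q'\<close> rlx_BR g3] by blast
        have "T r r2" using r1 \<open>T r1 r2\<close> T_trans by blast
        moreover have "T r3 r'" using \<open>T r3 r4\<close> r' T_trans by blast
        ultimately show ?thesis using g1 g2 h1 h2 h3 r' \<open>tr r2 a r3\<close> unfolding C_def ans_def by blast
      qed
    qed
  qed
  moreover assume "BR p q" "BR q r"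
  ultimately show "BR p r" using rlx_le unfolding C_def by blast
qed

lemma stutter: "BR s t \<Longrightarrow> T t u \<Longrightarrow> T u t1 \<Longrightarrow> BR s t1 \<Longrightarrow> BR s u"
proof -
  define St where "St = (\<lambda>u v. \<exists>t t1. T t u \<and> T u t1 \<and> BR t t1 \<and> BR t v)"
  define R where "R = (\<lambda>a b. BR a b \<or> St a b \<or> St b a)"
  have le: "\<And>a b. BR a b \<Longrightarrow> R a b" unfolding R_def by blast
  have "rlx R" unfolding rlx_def
  proof (intro conjI allI impI)
    show "symp R" unfolding R_def by (auto intro!: sympI dest: BR_sym)
  next
    fix a b c a' assume h: "R a b \<and> tr a c a'"
    then consider "BR a b" | "St a b" | "St b a" unfolding R_def by blast
    then show "ans R a b c a'"
    proof cases
      case 1 then have "ans BR a b c a'" using ans_BR h by blast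
      then show ?thesis by (rule ans_mono[OF _ le])
    next
      case 2
      then obtain t t1 where "T t a" "BR t b" unfolding St_def by blast
      then obtain v' where "T b v'" "BR a v'" using chain[OF _ rlx_BR] by metis
      then have "ans BR a v' c a'" using ans_BR h by blast
      then have "ans BR a b c a'" by (rule ans_prefix[OF \<open>T b v'\<close>])
      then show ?thesis by (rule ans_mono[OF _ le])
    next
      case 3
      then obtain t t1 where "T t b" "T b t1" "BR t t1" "BR t a" unfolding St_def by blast
      then have "BR a t1" using BR_trans BR_sym by blast
      then have "ans BR a t1 c a'" using ans_BR h by blast
      then have "ans BR a b c a'" by (rule ans_prefix[OF \<open>T b t1\<close>])
      then show ?thesis by (rule ans_mono[OF _ le])
    qed
  qed
  moreover assume "BR s t" "T t u" "T u t1" "BR s t1"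
  then have "St u s" unfolding St_def using BR_sym BR_trans by blast
  ultimately show "BR s u" using rlx_le BR_sym unfolding R_def by blast
qed

lemma path_of_T: "T a b \<Longrightarrow> (\<forall>z. T a z \<and> T z b \<longrightarrow> P z) \<longrightarrow>
   (\<exists>n f. f 0 = a \<and> f n = b \<and> (\<forall>i<n. tr (f i) tau (f (Suc i))) \<and> (\<forall>i\<le>n. P (f i)))"
proof (induction rule: T_induct)
  case refl
  show ?case
  proof
    assume "\<forall>z. T a z \<and> T z a \<longrightarrow> P z"
    then have "P a" using T_refl by blast
    then show "\<exists>n f. f 0 = a \<and> f n = a \<and> (\<forall>i<n. tr (f i) tau (f (Suc i))) \<and> (\<forall>i\<le>n. P (f i))"
      by (intro exI[of _ 0] exI[of _ "\<lambda>_. a"]) auto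
  qed
next
  case (step b c)
  show ?case
  proof
    assume H: "\<forall>z. T a z \<and> T z c \<longrightarrow> P z"
    then have "\<forall>z. T a z \<and> T z b \<longrightarrow> P z" using T_snoc step by blast
    then obtain n f where f: "f 0 = a" "f n = b" "\<forall>i<n. tr (f i) tau (f (Suc i))" "\<forall>i\<le>n. P (f i)"
      using step by blast
    have Pc: "P c" using H step T_snoc T_refl by blast
    define g where "g = f(Suc n := c)"
    have "g 0 = a" "g (Suc n) = c" using f by (auto simp: g_def)
    moreover have "\<forall>i<Suc n. tr (g i) tau (g (Suc i))"
    proof (intro allI impI)
      fix i assume "i < Suc n"
      then consider "i < n" | "i = n" by linarith
      then show "tr (g i) tau (g (Suc i))"
        by cases (use f step in \<open>auto simp: g_def\<close>)
    qed
    moreover have "\<forall>i\<le>Suc n. P (g i)"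
    proof (intro allI impI)
      fix i assume "i \<le> Suc n"
      then consider "i \<le> n" | "i = Suc n" by linarith
      then show "P (g i)" by cases (use f Pc in \<open>auto simp: g_def\<close>)
    qed
    ultimately show "\<exists>n f. f 0 = a \<and> f n = c \<and> (\<forall>i<n. tr (f i) tau (f (Suc i))) \<and> (\<forall>i\<le>n. P (f i))"
      by blast
  qed
qed

lemma T_of_path: "(\<forall>i<n. tr (f i) tau (f (Suc i))) \<Longrightarrow> T (f 0) (f n)"
  by (induction n) (auto simp: T_refl intro: T_snoc)

lemma wtrans_intro: "T a b \<Longrightarrow> (x' = Bm \<Longrightarrow> \<forall>z. T a z \<and> T z b \<longrightarrow> R t z) \<Longrightarrow> wtrans tr tau x' R t a b"
  unfolding wtrans_def using path_of_T[of a b "R t"] by (cases x') auto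

lemma wtrans_ttrans: assumes W: "wtrans tr tau x' R t a b" shows "ttrans tr tau x' R t a b"
proof (cases x')
  case Om then show ?thesis using W unfolding wtrans_def ttrans_def by simp
next
  case Bm
  from W obtain n f where f: "f 0 = a" "f n = b" "\<forall>i<n. tr (f i) tau (f (Suc i))" "\<forall>i\<le>n. R t (f i)"
    using Bm unfolding wtrans_def by auto
  have "T a b" using T_of_path[OF f(3)] f by simp
  moreover have "R t a" using f(1,4) by (metis le0)
  moreover have "R t b" using f(2,4) by (metis order_refl)
  ultimately show ?thesis using Bm unfolding ttrans_def by simp
qed

lemma ttrans_iff: "ttrans tr tau x' R t a b \<longleftrightarrow> T a b \<and> (x' = Bm \<longrightarrow> R t a \<and> R t b)"
  unfolding ttrans_def by (cases x') auto

lemma main_lemma: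
  "generic_bisimilar tr tau x y s0 t0 \<longleftrightarrow>
    (\<exists>R. symp R \<and> R s0 t0 \<and>
       (\<forall>s t a s'. R s t \<and> tr s a s' \<longrightarrow>
          (a = tau \<and> R s' t) \<or>
          (\<exists>t' t1 t2. wtrans tr tau x R s t t1 \<and> tr t1 a t2 \<and> wtrans tr tau y R s' t2 t' \<and> R s' t')))"
proof
  assume "generic_bisimilar tr tau x y s0 t0"
  then obtain R where gb: "generic_bisim tr tau x y R" and "R s0 t0"
    unfolding generic_bisimilar_def by blast
  have "rlx R" unfolding rlx_def
  proof (intro conjI allI impI)
    show "symp R" using gb unfolding generic_bisim_def by blast
  next
    fix s t a s' assume h: "R s t \<and> tr s a s'"
    then have "(a = tau \<and> R s' t) \<or>
        (\<exists>t' t1 t2. ttrans tr tau x R s t t1 \<and> tr t1 a t2 \<and> ttrans tr tau y R s' t2 t' \<and> R s' t')"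
      using gb unfolding generic_bisim_def by blast
    then show "ans R s t a s'" unfolding ans_def ttrans_iff using h T_refl by blast
  qed
  then have B0: "BR s0 t0" using rlx_le \<open>R s0 t0\<close> by blast
  have "\<forall>s t a s'. BR s t \<and> tr s a s' \<longrightarrow>
          (a = tau \<and> BR s' t) \<or>
          (\<exists>t' t1 t2. wtrans tr tau x BR s t t1 \<and> tr t1 a t2 \<and> wtrans tr tau y BR s' t2 t' \<and> BR s' t')"
  proof (intro allI impI)
    fix s t a s' assume h: "BR s t \<and> tr s a s'"
    then have "ans BR s t a s'" using ans_BR by blast
    then show "(a = tau \<and> BR s' t) \<or>
          (\<exists>t' t1 t2. wtrans tr tau x BR s t t1 \<and> tr t1 a t2 \<and> wtrans tr tau y BR s' t2 t' \<and> BR s' t')"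
      unfolding ans_def
    proof (elim disjE exE conjE)
      fix t' assume a: "a = tau" and "T t t'" and h1: "x = Bm \<longrightarrow> BR s t'" and h2: "BR s' t'"
      from T_end[OF \<open>T t t'\<close>] show ?thesis
      proof
        assume "t = t'" then show ?thesis using a h2 by blast
      next
        assume "\<exists>w. T t w \<and> tr w tau t'"
        then obtain w where w: "T t w" "tr w tau t'" by blast
        have "wtrans tr tau x BR s t w"
          by (rule wtrans_intro[OF w(1)]) (use h h1 w stutter T_snoc in blast)
        moreover have "wtrans tr tau y BR s' t' t'"
          by (rule wtrans_intro[OF T_refl]) (use h2 stutter in blast)
        ultimately show ?thesis using a w h2 by blast
      qed
    next
      fix t1 t2 t' assume "T t t1" and h1: "x = Bm \<longrightarrow> BR s t1" and "tr t1 a t2" and "T t2 t'"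
        and h2: "y = Bm \<longrightarrow> BR s' t2" and h3: "BR s' t'"
      have "wtrans tr tau x BR s t t1"
        by (rule wtrans_intro[OF \<open>T t t1\<close>]) (use h h1 stutter in blast)
      moreover have "wtrans tr tau y BR s' t2 t'"
        by (rule wtrans_intro[OF \<open>T t2 t'\<close>]) (use h2 h3 stutter in blast)
      ultimately show ?thesis using h3 \<open>tr t1 a t2\<close> by blast
    qed
  qed
  moreover have "symp BR" using rlx_BR unfolding rlx_def by blast
  ultimately show "\<exists>R. symp R \<and> R s0 t0 \<and>
       (\<forall>s t a s'. R s t \<and> tr s a s' \<longrightarrow>
          (a = tau \<and> R s' t) \<or>
          (\<exists>t' t1 t2. wtrans tr tau x R s t t1 \<and> tr t1 a t2 \<and> wtrans tr tau y R s' t2 t' \<and> R s' t'))"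
    using B0 by blast
next
  assume "\<exists>R. symp R \<and> R s0 t0 \<and>
       (\<forall>s t a s'. R s t \<and> tr s a s' \<longrightarrow>
          (a = tau \<and> R s' t) \<or>
          (\<exists>t' t1 t2. wtrans tr tau x R s t t1 \<and> tr t1 a t2 \<and> wtrans tr tau y R s' t2 t' \<and> R s' t'))"
  then obtain R where R: "symp R" "R s0 t0" and c: "\<forall>s t a s'. R s t \<and> tr s a s' \<longrightarrow>
          (a = tau \<and> R s' t) \<or>
          (\<exists>t' t1 t2. wtrans tr tau x R s t t1 \<and> tr t1 a t2 \<and> wtrans tr tau y R s' t2 t' \<and> R s' t')"
    by blast
  have "generic_bisim tr tau x y R"
    unfolding generic_bisim_def
  proof (intro conjI allI impI)
    fix s t a s' assume "R s t \<and> tr s a s'"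
    then have "(a = tau \<and> R s' t) \<or>
          (\<exists>t' t1 t2. wtrans tr tau x R s t t1 \<and> tr t1 a t2 \<and> wtrans tr tau y R s' t2 t' \<and> R s' t')"
      using c by blast
    then show "(a = tau \<and> R s' t) \<or>
          (\<exists>t' t1 t2. ttrans tr tau x R s t t1 \<and> tr t1 a t2 \<and> ttrans tr tau y R s' t2 t' \<and> R s' t')"
      using wtrans_ttrans by blast
  qed (rule R(1))
  then show "generic_bisimilar tr tau x y s0 t0" unfolding generic_bisimilar_def using R by blast
qed

end

theorem theorem4p9:
  fixes tr :: "'s \<Rightarrow> 'a \<Rightarrow> 's \<Rightarrow> bool" and tau :: 'a
    and x y :: mode and s0 t0 :: 's
  shows "generic_bisimilar tr tau x y s0 t0 \<longleftrightarrow>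
    (\<exists>R. symp R \<and> R s0 t0 \<and>
       (\<forall>s t a s'. R s t \<and> tr s a s' \<longrightarrow>
          (a = tau \<and> R s' t) \<or>
          (\<exists>t' t1 t2. wtrans tr tau x R s t t1 \<and> tr t1 a t2 \<and> wtrans tr tau y R s' t2 t' \<and> R s' t')))"
  by (rule main_lemma)

end
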